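(* Let $G$ be a graph such that the subgraph $G_\Delta$ induced by the vertices of maximum degree $\Delta(G)$ is acyclic. Then for every integer $t>\Delta(G)$, any proper $t$-edge coloring of $G$ can be transformed into a proper $\Delta(G)$-edge coloring of $G$ by a sequence of interchanges.
   Context: All graphs are finite, without loops and multiple edges. $\Delta(G)$ is the maximum degree of $G$. A proper $t$-edge coloring of $G$ is a map $f:E(G)\to\{1,\dots,t\}$ with $f(e)\neq f(e')$ for adjacent edges $e,e'$; a proper $\Delta(G)$-edge coloring obtained in this way is one using only colors from $\{1,\dots,\Delta(G)\}$. For a proper edge coloring $f$ and colors $a,b$, $G_f(a,b)$ is the subgraph induced by the edges colored $a$ or $b$. An interchange (Kempe change) consists of swapping colors $a$ and $b$ on one connected component of $G_f(a,b)$. *)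

theory Defs
  imports Main
begin

definition simple_graph :: "'a set \<Rightarrow> 'a set set \<Rightarrow> bool" where
  "simple_graph V E \<longleftrightarrow> finite V \<and> (\<forall>e\<in>E. \<exists>u v. e = {u, v} \<and> u \<noteq> v \<and> u \<in> V \<and> v \<in> V)"

definition degree :: "'a set set \<Rightarrow> 'a \<Rightarrow> nat" where
  "degree E v = card {e \<in> E. v \<in> e}"

definition max_degree :: "'a set \<Rightarrow> 'a set set \<Rightarrow> nat" where
  "max_degree V E = Max (insert 0 (degree E ` V))"

definition max_deg_vertices :: "'a set \<Rightarrow> 'a set set \<Rightarrow> 'a set" where
  "max_deg_vertices V E = {v \<in> V. degree E v = max_degree V E}"

definition induced_edges :: "'a set set \<Rightarrow> 'a set \<Rightarrow> 'a set set" where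
  "induced_edges E W = {e \<in> E. e \<subseteq> W}"

definition acyclic_graph :: "'a set \<Rightarrow> 'a set set \<Rightarrow> bool" where
  "acyclic_graph W F \<longleftrightarrow>
     \<not> (\<exists>vs. length vs \<ge> 3 \<and> distinct vs \<and> set vs \<subseteq> W \<and>
            (\<forall>i < length vs - 1. {vs ! i, vs ! Suc i} \<in> F) \<and>
            {last vs, hd vs} \<in> F)"

definition proper_edge_coloring :: "'a set set \<Rightarrow> nat \<Rightarrow> ('a set \<Rightarrow> nat) \<Rightarrow> bool" where
  "proper_edge_coloring E t f \<longleftrightarrow>
     (\<forall>e\<in>E. f e \<in> {1..t}) \<and>
     (\<forall>e\<in>E. \<forall>e'\<in>E. e \<noteq> e' \<and> e \<inter> e' \<noteq> {} \<longrightarrow> f e \<noteq> f e')"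

definition two_colored_edges :: "'a set set \<Rightarrow> ('a set \<Rightarrow> nat) \<Rightarrow> nat \<Rightarrow> nat \<Rightarrow> 'a set set" where
  "two_colored_edges E f a b = {e \<in> E. f e = a \<or> f e = b}"

definition edge_adj :: "'a set set \<Rightarrow> 'a \<Rightarrow> 'a \<Rightarrow> bool" where
  "edge_adj F u w \<longleftrightarrow> {u, w} \<in> F"

definition component_edges :: "'a set set \<Rightarrow> 'a \<Rightarrow> 'a set set" where
  "component_edges F v = {e \<in> F. \<exists>u\<in>e. (edge_adj F)\<^sup>*\<^sup>* v u}"

definition interchange :: "'a set set \<Rightarrow> nat \<Rightarrow> ('a set \<Rightarrow> nat) \<Rightarrow> ('a set \<Rightarrow> nat) \<Rightarrow> bool" where
  "interchange E t f g \<longleftrightarrow>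
     (\<exists>a b v. a \<in> {1..t} \<and> b \<in> {1..t} \<and>
        (let K = component_edges (two_colored_edges E f a b) v in
          K \<noteq> {} \<and>
          g = (\<lambda>e. if e \<in> K then (if f e = a then b else a) else f e)))"

end

theory Submission
  imports Defs
begin
locale kg =
  fixes V :: "'a set" and E :: "'a set set" and t :: nat
  assumes sg: "simple_graph V E" and tgt: "max_degree V E < t"
begin

abbreviation "m \<equiv> max_degree V E"

lemma finV: "finite V" using sg by (simp add: simple_graph_def)

lemma edgeE: assumes "e \<in> E" obtains u v where "e = {u,v}" "u \<noteq> v" "u \<in> V" "v \<in> V"
  using sg assms unfolding simple_graph_def by blast

lemma E_sub: "E \<subseteq> Pow V" using edgeE by blast

lemma finE: "finite E" using finV E_sub by (meson finite_Pow_iff finite_subset)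

lemma edge_V: "e \<in> E \<Longrightarrow> u \<in> e \<Longrightarrow> u \<in> V" using edgeE by blast

lemma edge_card: assumes "e \<in> E" shows "card e = 2"
proof -
  obtain u v where "e = {u,v}" "u \<noteq> v" using edgeE[OF assms] by blast
  then show ?thesis by simp
qed

lemma edge_ne: assumes "{u,v} \<in> E" shows "u \<noteq> v"
proof
  assume "u = v"
  then have "card {u,v} = 1" by simp
  with edge_card[OF assms] show False by simp
qed

lemma deg_le: "u \<in> V \<Longrightarrow> degree E u \<le> m"
  unfolding max_degree_def using finV by (intro Max_ge) auto

lemma deg_le': "e \<in> E \<Longrightarrow> u \<in> e \<Longrightarrow> degree E u \<le> m"
  using deg_le edge_V by blast

lemma proper_uniq: "proper_edge_coloring E t f \<Longrightarrow> e \<in> E \<Longrightarrow> e' \<in> E \<Longrightarrow> u \<in> e \<Longrightarrow> u \<in> e'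
   \<Longrightarrow> f e = f e' \<Longrightarrow> e = e'"
  unfolding proper_edge_coloring_def by (metis IntI empty_iff)

lemma proper_range: "proper_edge_coloring E t f \<Longrightarrow> e \<in> E \<Longrightarrow> f e \<in> {1..t}"
  unfolding proper_edge_coloring_def by blast

definition miss :: "('a set \<Rightarrow> nat) \<Rightarrow> 'a \<Rightarrow> nat set" where
  "miss f u = {d\<in>{1..m}. \<not>(\<exists>e\<in>E. u\<in>e \<and> f e = d)}"

definition hc :: "('a set \<Rightarrow> nat) \<Rightarrow> nat" where
  "hc f = card {e\<in>E. m < f e}"

definition good :: "('a set \<Rightarrow> nat) \<Rightarrow> bool" where
  "good f = (\<exists>g. (interchange E t)\<^sup>*\<^sup>* f g \<and> proper_edge_coloring E t g \<and> hc g < hc f)"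

lemma good_trans: "(interchange E t)\<^sup>*\<^sup>* f g \<Longrightarrow> hc g \<le> hc f \<Longrightarrow> good g \<Longrightarrow> good f"
  unfolding good_def by (meson order.strict_trans2 rtranclp_trans)

lemma miss_nonempty:
  assumes "e \<in> E" "u \<in> e" "m < f e"
  shows "miss f u \<noteq> {}"
proof
  assume M: "miss f u = {}"
  let ?S = "{e\<in>E. u\<in>e \<and> f e \<le> m}"
  have "{1..m} \<subseteq> f ` ?S"
  proof
    fix d assume d: "d \<in> {1..m}"
    then have "d \<notin> miss f u" using M by simp
    with d obtain e' where "e'\<in>E" "u\<in>e'" "f e' = d" unfolding miss_def by blast
    then show "d \<in> f ` ?S" using d by force
  qed
  moreover have "finite (f ` ?S)" using finE by simp
  ultimately have "card {1..m} \<le> card (f ` ?S)" by (rule card_mono[rotated])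
  then have "m \<le> card (f ` ?S)" by simp
  also have "\<dots> \<le> card ?S" using finE by (simp add: card_image_le)
  also have "\<dots> < card {e\<in>E. u\<in>e}"
  proof (rule psubset_card_mono)
    show "finite {e\<in>E. u\<in>e}" using finE by simp
    have "e \<in> {e\<in>E. u\<in>e}" "e \<notin> ?S" using assms by auto
    then show "?S \<subset> {e\<in>E. u\<in>e}" by blast
  qed
  also have "\<dots> \<le> m" using deg_le'[OF assms(1,2)] unfolding degree_def .
  finally show False by simp
qed

lemma sat_deg:
  assumes "u \<in> V" "miss f u = {}"
  shows "degree E u = m"
proof -
  let ?S = "{e\<in>E. u\<in>e}"
  have "{1..m} \<subseteq> f ` ?S"
  proof
    fix d assume d: "d \<in> {1..m}"
    then have "d \<notin> miss f u" using assms by simp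
    with d obtain e' where "e'\<in>E" "u\<in>e'" "f e' = d" unfolding miss_def by blast
    then show "d \<in> f ` ?S" by force
  qed
  moreover have "finite (f ` ?S)" using finE by simp
  ultimately have "card {1..m} \<le> card (f ` ?S)" by (rule card_mono[rotated])
  then have "m \<le> card (f ` ?S)" by simp
  also have "\<dots> \<le> card ?S" using finE by (simp add: card_image_le)
  finally have "m \<le> degree E u" unfolding degree_def .
  then show ?thesis using deg_le[OF assms(1)] by linarith
qed

end

context kg begin

definition TC where "TC f a b = two_colored_edges E f a b"
definition CV where "CV f a b v = {u. (edge_adj (TC f a b))\<^sup>*\<^sup>* v u}"
definition CK where "CK f a b v = component_edges (TC f a b) v"
definition kswap where
  "kswap f a b v = (\<lambda>e. if e \<in> CK f a b v then (if f e = a then b else a) else f e)"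
definition sw :: "nat \<Rightarrow> nat \<Rightarrow> nat \<Rightarrow> nat" where
  "sw a b x = (if x = a then b else if x = b then a else x)"

lemma TC_iff: "e \<in> TC f a b \<longleftrightarrow> e \<in> E \<and> (f e = a \<or> f e = b)"
  unfolding TC_def two_colored_edges_def by simp

lemma CK_iff: "e \<in> CK f a b v \<longleftrightarrow> e \<in> TC f a b \<and> (\<exists>u\<in>e. u \<in> CV f a b v)"
  unfolding CK_def CV_def component_edges_def by simp

lemma CK_E: "e \<in> CK f a b v \<Longrightarrow> e \<in> E \<and> (f e = a \<or> f e = b)"
  unfolding CK_iff TC_iff by simp

lemma CK_I: "e \<in> E \<Longrightarrow> f e = a \<or> f e = b \<Longrightarrow> u \<in> e \<Longrightarrow> u \<in> CV f a b v \<Longrightarrow> e \<in> CK f a b v"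
  unfolding CK_iff TC_iff by blast

lemma CV_v: "v \<in> CV f a b v" unfolding CV_def by simp

lemma CV_step: "u \<in> CV f a b v \<Longrightarrow> {u,w} \<in> TC f a b \<Longrightarrow> w \<in> CV f a b v"
  unfolding CV_def edge_adj_def by (simp add: rtranclp.rtrancl_into_rtrancl)

lemma CK_sub_CV: assumes "e \<in> CK f a b v" shows "e \<subseteq> CV f a b v"
proof -
  have "e \<in> TC f a b \<and> (\<exists>u\<in>e. u \<in> CV f a b v)" using assms unfolding CK_iff .
  then have eT: "e \<in> TC f a b" and ex: "\<exists>u\<in>e. u \<in> CV f a b v" by auto
  have "e \<in> E" using CK_E[OF assms] by simp
  obtain p q where pq: "e = {p,q}" using edgeE[OF \<open>e\<in>E\<close>] by blast
  have T1: "{p,q} \<in> TC f a b" using eT pq by simp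
  have "{q,p} = {p,q}" by (rule insert_commute)
  then have T2: "{q,p} \<in> TC f a b" using T1 by simp
  obtain u where u: "u \<in> e" "u \<in> CV f a b v" using ex by blast
  have "p \<in> CV f a b v \<and> q \<in> CV f a b v"
  proof (cases "u = p")
    case True
    then have "p \<in> CV f a b v" using u by simp
    then show ?thesis using CV_step[OF _ T1] by blast
  next
    case False
    then have "u = q" using u pq by simp
    then have "q \<in> CV f a b v" using u by simp
    then show ?thesis using CV_step[OF _ T2] by blast
  qed
  then show ?thesis using pq by simp
qed

lemma CV_sub: "CV f a b v \<subseteq> insert v V"
proof
  fix u assume "u \<in> CV f a b v"
  then have "(edge_adj (TC f a b))\<^sup>*\<^sup>* v u" unfolding CV_def by simp
  then show "u \<in> insert v V"
  proof (induction rule: rtranclp_induct)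
    case base then show ?case by simp
  next
    case (step y z)
    then have "{y,z} \<in> E" unfolding edge_adj_def TC_iff by simp
    then show ?case using edge_V by blast
  qed
qed

lemma fin_CV: "finite (CV f a b v)"
  using finite_subset[OF CV_sub] finV by simp

lemma CK_subE: "CK f a b v \<subseteq> E" using CK_E by blast

lemma fin_CK: "finite (CK f a b v)"
  using finite_subset[OF CK_subE finE] .

lemma CV_edge: assumes "u \<in> CV f a b v" "u \<noteq> v" shows "\<exists>e\<in>CK f a b v. u \<in> e"
proof -
  from assms have "(edge_adj (TC f a b))\<^sup>*\<^sup>* v u" unfolding CV_def by simp
  then obtain p where "(edge_adj (TC f a b))\<^sup>*\<^sup>* v p" "edge_adj (TC f a b) p u"
  proof (cases rule: rtranclp.cases)
    case rtrancl_refl then show ?thesis using assms(2) by simp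
  next
    case (rtrancl_into_rtrancl q) then show ?thesis using that by blast
  qed
  then have "p \<in> CV f a b v" "{p,u} \<in> TC f a b" unfolding CV_def edge_adj_def by auto
  then have "{p,u} \<in> CK f a b v" unfolding CK_iff by blast
  then show ?thesis by blast
qed

lemma kswap_interchange:
  assumes "a \<in> {1..t}" "b \<in> {1..t}" "CK f a b v \<noteq> {}"
  shows "interchange E t f (kswap f a b v)"
proof -
  have "kswap f a b v = (\<lambda>e. if e \<in> component_edges (two_colored_edges E f a b) v then (if f e = a then b else a) else f e)"
    unfolding kswap_def CK_def TC_def by (rule refl)
  moreover have "component_edges (two_colored_edges E f a b) v \<noteq> {}" using assms(3) unfolding CK_def TC_def .
  ultimately show ?thesis unfolding interchange_def Let_def using assms(1,2) by blast
qed

lemma kswap_out: "e \<notin> CK f a b v \<Longrightarrow> kswap f a b v e = f e"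
  unfolding kswap_def by simp

lemma kswap_in: assumes "e \<in> CK f a b v" shows "kswap f a b v e = sw a b (f e)"
proof -
  have "f e = a \<or> f e = b" using CK_E[OF assms] by blast
  then show ?thesis unfolding kswap_def sw_def using assms by auto
qed

lemma kswap_other: assumes "c \<noteq> a" "c \<noteq> b" shows "kswap f a b v e = c \<longleftrightarrow> f e = c"
proof (cases "e \<in> CK f a b v")
  case True
  then have "f e = a \<or> f e = b" using CK_E by blast
  then show ?thesis using True assms kswap_in[OF True] unfolding sw_def by auto
next
  case False then show ?thesis by (simp add: kswap_out)
qed

lemma kswap_outV: "u \<notin> CV f a b v \<Longrightarrow> u \<in> e \<Longrightarrow> kswap f a b v e = f e"
  using CK_sub_CV kswap_out by blast

lemma kswap_inV: assumes "u \<in> CV f a b v" "u \<in> e" "e \<in> E"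
  shows "kswap f a b v e = sw a b (f e)"
proof (cases "f e = a \<or> f e = b")
  case True
  then have "e \<in> CK f a b v" using CK_I assms by blast
  then show ?thesis by (rule kswap_in)
next
  case False
  then have "e \<notin> CK f a b v" using CK_E by blast
  then show ?thesis using False by (simp add: kswap_out sw_def)
qed

lemma sw_sw: "sw a b (sw a b x) = x" unfolding sw_def by auto

lemma kswap_inV_col: assumes "u \<in> CV f a b v"
  shows "(\<exists>e\<in>E. u \<in> e \<and> kswap f a b v e = d) \<longleftrightarrow> (\<exists>e\<in>E. u \<in> e \<and> f e = sw a b d)"
proof -
  have "\<And>e. e \<in> E \<Longrightarrow> u \<in> e \<Longrightarrow> kswap f a b v e = d \<longleftrightarrow> f e = sw a b d"
  proof -
    fix e assume "e \<in> E" "u \<in> e"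
    then have k: "kswap f a b v e = sw a b (f e)" using kswap_inV[OF assms] by blast
    have "sw a b (f e) = d \<longleftrightarrow> f e = sw a b d" by (metis sw_sw)
    then show "kswap f a b v e = d \<longleftrightarrow> f e = sw a b d" using k by simp
  qed
  then show ?thesis by blast
qed

lemma miss_outV: "u \<notin> CV f a b v \<Longrightarrow> miss (kswap f a b v) u = miss f u"
proof -
  assume "u \<notin> CV f a b v"
  then have "\<And>e. u \<in> e \<Longrightarrow> kswap f a b v e = f e" using kswap_outV by blast
  then have "\<And>d. (\<exists>e\<in>E. u\<in>e \<and> kswap f a b v e = d) \<longleftrightarrow> (\<exists>e\<in>E. u\<in>e \<and> f e = d)"
    by metis
  then show ?thesis unfolding miss_def by simp
qed

lemma miss_other: "d \<noteq> a \<Longrightarrow> d \<noteq> b \<Longrightarrow> d \<in> miss (kswap f a b v) u \<longleftrightarrow> d \<in> miss f u"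
  unfolding miss_def using kswap_other by simp

lemma miss_inV: "u \<in> CV f a b v \<Longrightarrow> d \<in> {1..m} \<Longrightarrow> sw a b d \<in> {1..m} \<Longrightarrow>
   d \<in> miss (kswap f a b v) u \<longleftrightarrow> sw a b d \<in> miss f u"
  unfolding miss_def using kswap_inV_col by simp

lemma kswap_proper:
  assumes P: "proper_edge_coloring E t f" and ab: "a \<in> {1..t}" "b \<in> {1..t}"
  shows "proper_edge_coloring E t (kswap f a b v)"
  unfolding proper_edge_coloring_def
proof (intro conjI ballI impI)
  fix e assume "e \<in> E"
  then show "kswap f a b v e \<in> {1..t}"
  proof (cases "e \<in> CK f a b v")
    case True then show ?thesis using ab unfolding kswap_def by simp
  next
    case False then show ?thesis using proper_range[OF P \<open>e\<in>E\<close>] unfolding kswap_def by simp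
  qed
next
  fix e e' assume e: "e \<in> E" and e': "e' \<in> E" and ne: "e \<noteq> e' \<and> e \<inter> e' \<noteq> {}"
  then obtain u where u: "u \<in> e" "u \<in> e'" by blast
  have fne: "f e \<noteq> f e'" using proper_uniq[OF P e e' u] ne by blast
  show "kswap f a b v e \<noteq> kswap f a b v e'"
  proof (cases "u \<in> CV f a b v")
    case True
    have "sw a b (f e) \<noteq> sw a b (f e')" using fne by (metis sw_sw)
    then show ?thesis using kswap_inV[OF True u(1) e] kswap_inV[OF True u(2) e'] by simp
  next
    case False
    then show ?thesis using kswap_outV[OF False] u fne by simp
  qed
qed

end

context kg begin

lemma handshake:
  assumes "K' \<subseteq> CK f a b v"
  shows "(\<Sum>u\<in>CV f a b v. card {e\<in>K'. u\<in>e}) = 2 * card K'"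
proof -
  let ?C = "CV f a b v"
  have fC: "finite ?C" by (rule fin_CV)
  have fK: "finite K'" using finite_subset[OF assms fin_CK] .
  have "(\<Sum>u\<in>?C. card {e\<in>K'. u\<in>e}) = (\<Sum>u\<in>?C. \<Sum>e\<in>K'. if u\<in>e then 1 else 0)"
  proof (rule sum.cong[OF refl])
    fix u
    have "card {e\<in>K'. u\<in>e} = (\<Sum>e\<in>{e\<in>K'. u\<in>e}. 1)" by simp
    also have "\<dots> = (\<Sum>e\<in>K'. if u\<in>e then 1 else 0)" by (rule sum.inter_filter[OF fK])
    finally show "card {e\<in>K'. u\<in>e} = (\<Sum>e\<in>K'. if u\<in>e then 1 else 0)" .
  qed
  also have "\<dots> = (\<Sum>e\<in>K'. \<Sum>u\<in>?C. if u\<in>e then 1 else 0)" by (rule sum.swap)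
  also have "\<dots> = (\<Sum>e\<in>K'. 2)"
  proof (rule sum.cong[OF refl])
    fix e assume eK: "e \<in> K'"
    then have eCK: "e \<in> CK f a b v" using assms by blast
    have "(\<Sum>u\<in>?C. if u\<in>e then 1 else 0) = (\<Sum>u\<in>{u\<in>?C. u\<in>e}. 1::nat)"
      by (rule sum.inter_filter[OF fC, symmetric])
    also have "{u\<in>?C. u\<in>e} = e" using CK_sub_CV[OF eCK] by blast
    also have "(\<Sum>u\<in>e. 1::nat) = card e" by simp
    also have "\<dots> = 2" using edge_card CK_E[OF eCK] by blast
    finally show "(\<Sum>u\<in>?C. if u\<in>e then 1 else 0) = (2::nat)" .
  qed
  also have "\<dots> = 2 * card K'" by simp
  finally show ?thesis .
qed

definition dist :: "('a set \<Rightarrow> nat) \<Rightarrow> nat \<Rightarrow> nat \<Rightarrow> 'a \<Rightarrow> 'a \<Rightarrow> nat" where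
  "dist f a b v u = (LEAST n. (edge_adj (TC f a b) ^^ n) v u)"

definition par where
  "par f a b v u = (SOME p. (edge_adj (TC f a b) ^^ (dist f a b v u - 1)) v p \<and> edge_adj (TC f a b) p u)"

lemma dist_prop: assumes "u \<in> CV f a b v"
  shows "(edge_adj (TC f a b) ^^ dist f a b v u) v u"
proof -
  from assms obtain n where "(edge_adj (TC f a b) ^^ n) v u"
    unfolding CV_def rtranclp_power by blast
  then show ?thesis unfolding dist_def by (rule LeastI)
qed

lemma dist_le: "(edge_adj (TC f a b) ^^ n) v u \<Longrightarrow> dist f a b v u \<le> n"
  unfolding dist_def by (rule Least_le)

lemma par_prop: assumes "u \<in> CV f a b v" "u \<noteq> v"
  shows "(edge_adj (TC f a b) ^^ (dist f a b v u - 1)) v (par f a b v u)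
     \<and> edge_adj (TC f a b) (par f a b v u) u \<and> dist f a b v u > 0"
proof -
  let ?R = "edge_adj (TC f a b)"
  have d: "(?R ^^ dist f a b v u) v u" by (rule dist_prop[OF assms(1)])
  have pos: "dist f a b v u > 0"
  proof (rule ccontr)
    assume "\<not> 0 < dist f a b v u"
    then have "dist f a b v u = 0" by simp
    with d have "u = v" by simp
    with assms(2) show False by simp
  qed
  then obtain k where k: "dist f a b v u = Suc k" using gr0_implies_Suc by blast
  from d k obtain p where "(?R ^^ k) v p" "?R p u" by (auto elim: relpowp_Suc_E)
  then have ex: "\<exists>p. (?R ^^ (dist f a b v u - 1)) v p \<and> ?R p u" using k by auto
  show ?thesis using someI_ex[OF ex] pos unfolding par_def by blast
qed

lemma card_CV: "card (CV f a b v) \<le> card (CK f a b v) + 1"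
proof -
  let ?C = "CV f a b v" and ?K = "CK f a b v" and ?R = "edge_adj (TC f a b)"
  let ?phi = "\<lambda>u. {par f a b v u, u}"
  have pl: "dist f a b v (par f a b v u) < dist f a b v u" if "u \<in> ?C" "u \<noteq> v" for u
  proof -
    have "(?R ^^ (dist f a b v u - 1)) v (par f a b v u)" "dist f a b v u > 0"
      using par_prop[OF that] by blast+
    then show ?thesis using dist_le by fastforce
  qed
  have img: "?phi ` (?C - {v}) \<subseteq> ?K"
  proof
    fix e assume "e \<in> ?phi ` (?C - {v})"
    then obtain u where u: "u \<in> ?C" "u \<noteq> v" "e = ?phi u" by blast
    have P: "(?R ^^ (dist f a b v u - 1)) v (par f a b v u)" "?R (par f a b v u) u"
      using par_prop[OF u(1,2)] by blast+
    have "par f a b v u \<in> ?C" using relpowp_imp_rtranclp[OF P(1)] unfolding CV_def by simp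
    moreover have "?phi u \<in> TC f a b" using P(2) unfolding edge_adj_def .
    ultimately show "e \<in> ?K" using u(3) unfolding CK_iff by blast
  qed
  have inj: "inj_on ?phi (?C - {v})"
  proof (rule inj_onI)
    fix u w assume u: "u \<in> ?C - {v}" and w: "w \<in> ?C - {v}" and eq: "?phi u = ?phi w"
    show "u = w"
    proof (rule ccontr)
      assume "u \<noteq> w"
      with eq have "u = par f a b v w" "w = par f a b v u" by (auto simp: doubleton_eq_iff)
      then show False using pl[of u] pl[of w] u w by auto
    qed
  qed
  have "card (?C - {v}) \<le> card ?K" using card_inj_on_le[OF inj img fin_CK] .
  moreover have "card ?C = card (?C - {v}) + 1" using CV_v fin_CV
    by (metis card_Suc_Diff1 Suc_eq_plus1)
  ultimately show ?thesis by simp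
qed

lemma card_le1: assumes "finite A" "\<And>x y. x \<in> A \<Longrightarrow> y \<in> A \<Longrightarrow> x = y" shows "card A \<le> 1"
  using assms by (simp add: card_le_Suc0_iff_eq)

lemma deg_le2: assumes P: "proper_edge_coloring E t f"
  shows "card {e\<in>CK f a b v. u\<in>e} \<le> 2"
proof -
  let ?S = "{e\<in>CK f a b v. u\<in>e}"
  have fS: "finite ?S" using fin_CK by simp
  have inj: "inj_on f ?S"
  proof (rule inj_onI)
    fix x y assume "x \<in> ?S" "y \<in> ?S" "f x = f y"
    then show "x = y" using proper_uniq[OF P] CK_E by blast
  qed
  have "f ` ?S \<subseteq> {a,b}" using CK_E by blast
  then have "card (f ` ?S) \<le> card {a,b}" by (rule card_mono[rotated]) simp
  also have "\<dots> \<le> 2" by (simp add: card_insert_le_m1)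
  finally show ?thesis using card_image[OF inj] by simp
qed

lemma slack: assumes P: "proper_edge_coloring E t f"
  shows "(\<Sum>u\<in>CV f a b v. (2 - card {e\<in>CK f a b v. u\<in>e})) \<le> 2"
proof -
  let ?C = "CV f a b v" and ?K = "CK f a b v"
  let ?d = "\<lambda>u. card {e\<in>?K. u\<in>e}"
  have "(\<Sum>u\<in>?C. (2 - ?d u)) + (\<Sum>u\<in>?C. ?d u) = (\<Sum>u\<in>?C. (2 - ?d u) + ?d u)"
    by (simp add: sum.distrib)
  also have "\<dots> = (\<Sum>u\<in>?C. 2)" using deg_le2[OF P] by (intro sum.cong) auto
  also have "\<dots> = 2 * card ?C" by simp
  finally have "(\<Sum>u\<in>?C. (2 - ?d u)) + 2 * card ?K = 2 * card ?C"
    using handshake[of ?K f a b v] by simp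
  then show ?thesis using card_CV[of f a b v] by linarith
qed

lemma deg_one:
  assumes P: "proper_edge_coloring E t f" and e0: "e0 \<in> CK f a b v" "u \<in> e0"
    and miss1: "(\<not>(\<exists>e\<in>E. u\<in>e \<and> f e = a)) \<or> (\<not>(\<exists>e\<in>E. u\<in>e \<and> f e = b))"
  shows "card {e\<in>CK f a b v. u\<in>e} = 1"
proof -
  let ?S = "{e\<in>CK f a b v. u\<in>e}"
  have "?S = {e0}"
  proof
    show "{e0} \<subseteq> ?S" using e0 by blast
    show "?S \<subseteq> {e0}"
    proof
      fix e assume e: "e \<in> ?S"
      have E1: "e \<in> E" "f e = a \<or> f e = b" "u \<in> e" using e CK_E by blast+
      have E0: "e0 \<in> E" "f e0 = a \<or> f e0 = b" using e0 CK_E by blast+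
      have "f e = f e0" using miss1
      proof (elim disjE)
        assume n: "\<not>(\<exists>e\<in>E. u\<in>e \<and> f e = a)"
        have "f e \<noteq> a" using n E1 by blast
        moreover have "f e0 \<noteq> a" using n E0(1) e0(2) by blast
        ultimately show ?thesis using E1(2) E0(2) by simp
      next
        assume n: "\<not>(\<exists>e\<in>E. u\<in>e \<and> f e = b)"
        have "f e \<noteq> b" using n E1 by blast
        moreover have "f e0 \<noteq> b" using n E0(1) e0(2) by blast
        ultimately show ?thesis using E1(2) E0(2) by simp
      qed
      then show "e \<in> {e0}" using proper_uniq[OF P E1(1) E0(1) E1(3) e0(2)] by simp
    qed
  qed
  then show ?thesis by simp
qed

lemma three_contra:
  assumes P: "proper_edge_coloring E t f"
    and u: "u1 \<in> CV f a b v" "u2 \<in> CV f a b v" "u3 \<in> CV f a b v"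
    and dist3: "u1 \<noteq> u2" "u1 \<noteq> u3" "u2 \<noteq> u3"
    and d: "card {e\<in>CK f a b v. u1\<in>e} = 1" "card {e\<in>CK f a b v. u2\<in>e} = 1"
      "card {e\<in>CK f a b v. u3\<in>e} = 1"
  shows False
proof -
  let ?s = "\<lambda>u. 2 - card {e\<in>CK f a b v. u\<in>e}"
  have "(\<Sum>u\<in>{u1,u2,u3}. ?s u) \<le> (\<Sum>u\<in>CV f a b v. ?s u)"
    using u fin_CV by (intro sum_mono2) auto
  also have "\<dots> \<le> 2" by (rule slack[OF P])
  finally show False using d dist3 by simp
qed

end

context kg begin

lemma hc_eq_low: assumes "a \<le> m" "b \<le> m" shows "hc (kswap f a b v) = hc f"
proof -
  have "{e\<in>E. m < kswap f a b v e} = {e\<in>E. m < f e}"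
  proof (intro Collect_cong conj_cong refl)
    fix e
    show "m < kswap f a b v e \<longleftrightarrow> m < f e"
    proof (cases "e \<in> CK f a b v")
      case True
      then have "f e = a \<or> f e = b" using CK_E by blast
      then show ?thesis using assms kswap_in[OF True] unfolding sw_def by auto
    next
      case False then show ?thesis by (simp add: kswap_out)
    qed
  qed
  then show ?thesis unfolding hc_def by simp
qed

lemma hc_split:
  assumes "a \<le> m" "m < b"
  shows "hc (kswap f a b v) = card {e\<in>E - CK f a b v. m < f e} + card {e\<in>CK f a b v. f e = a}"
    and "hc f = card {e\<in>E - CK f a b v. m < f e} + card {e\<in>CK f a b v. f e = b}"
proof -
  let ?K = "CK f a b v" and ?A = "{e\<in>E - CK f a b v. m < f e}"
  have fA: "finite ?A" using finE by simp
  have fK: "finite {e\<in>?K. f e = a}" "finite {e\<in>?K. f e = b}" using fin_CK by simp_all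
  have "{e\<in>E. m < kswap f a b v e} = ?A \<union> {e\<in>?K. f e = a}"
  proof (rule set_eqI)
    fix e
    show "e \<in> {e\<in>E. m < kswap f a b v e} \<longleftrightarrow> e \<in> ?A \<union> {e\<in>?K. f e = a}"
    proof (cases "e \<in> ?K")
      case True
      then have "f e = a \<or> f e = b" "e \<in> E" using CK_E by blast+
      then show ?thesis using assms kswap_in[OF True] True unfolding sw_def by auto
    next
      case False then show ?thesis by (simp add: kswap_out)
    qed
  qed
  moreover have "?A \<inter> {e\<in>?K. f e = a} = {}" by blast
  ultimately show "hc (kswap f a b v) = card ?A + card {e\<in>?K. f e = a}"
    unfolding hc_def using card_Un_disjoint[OF fA fK(1)] by simp
  have "{e\<in>E. m < f e} = ?A \<union> {e\<in>?K. f e = b}"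
  proof (rule set_eqI)
    fix e
    show "e \<in> {e\<in>E. m < f e} \<longleftrightarrow> e \<in> ?A \<union> {e\<in>?K. f e = b}"
    proof (cases "e \<in> ?K")
      case True
      then have "f e = a \<or> f e = b" "e \<in> E" using CK_E by blast+
      then show ?thesis using assms True by auto
    next
      case False then show ?thesis by simp
    qed
  qed
  moreover have "?A \<inter> {e\<in>?K. f e = b} = {}" by blast
  ultimately show "hc f = card ?A + card {e\<in>?K. f e = b}"
    unfolding hc_def using card_Un_disjoint[OF fA fK(2)] by simp
qed

lemma col_deg_le1: assumes P: "proper_edge_coloring E t f"
  shows "card {e\<in>{e\<in>CK f a b v. f e = c}. u\<in>e} \<le> 1"
proof (rule card_le1)
  show "finite {e\<in>{e\<in>CK f a b v. f e = c}. u\<in>e}" using fin_CK by simp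
  fix x y assume "x \<in> {e\<in>{e\<in>CK f a b v. f e = c}. u\<in>e}" "y \<in> {e\<in>{e\<in>CK f a b v. f e = c}. u\<in>e}"
  then show "x = y" using proper_uniq[OF P] CK_E by (metis (mono_tags, lifting) mem_Collect_eq)
qed

lemma hc_le_swap:
  assumes P: "proper_edge_coloring E t f" and ab: "a \<le> m" "m < b"
    and u0: "u0 \<in> CV f a b v" and na: "\<not>(\<exists>e\<in>E. u0\<in>e \<and> f e = a)"
    and e1: "e1 \<in> E" "u0 \<in> e1" "f e1 = b"
  shows "hc (kswap f a b v) \<le> hc f"
proof -
  let ?C = "CV f a b v" and ?K = "CK f a b v"
  let ?Ka = "{e\<in>?K. f e = a}" and ?Kb = "{e\<in>?K. f e = b}"
  let ?da = "\<lambda>u. card {e\<in>?Ka. u\<in>e}" and ?db = "\<lambda>u. card {e\<in>?Kb. u\<in>e}"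
  let ?d = "\<lambda>u. card {e\<in>?K. u\<in>e}"
  let ?s = "\<lambda>u. 2 - ?d u"
  have anb: "a \<noteq> b" using ab by simp
  have dsum: "?d u = ?da u + ?db u" for u
  proof -
    have "{e\<in>?K. u\<in>e} = {e\<in>?Ka. u\<in>e} \<union> {e\<in>?Kb. u\<in>e}" using CK_E by blast
    moreover have "{e\<in>?Ka. u\<in>e} \<inter> {e\<in>?Kb. u\<in>e} = {}" using anb by blast
    moreover have "finite {e\<in>?Ka. u\<in>e}" "finite {e\<in>?Kb. u\<in>e}" using fin_CK by simp_all
    ultimately show ?thesis by (simp add: card_Un_disjoint)
  qed
  have da1: "?da u \<le> 1" for u by (rule col_deg_le1[OF P])
  have db1: "?db u \<le> 1" for u by (rule col_deg_le1[OF P])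
  have ineq: "?da u \<le> ?db u + ?s u" for u using dsum[of u] da1[of u] by simp
  have e1K: "e1 \<in> ?K" using CK_I[OF e1(1) _ e1(2) u0] e1(3) by simp
  have da0: "?da u0 = 0"
  proof -
    have h: "{e\<in>?Ka. u0\<in>e} = {}" using na CK_E by blast
    show ?thesis unfolding h by simp
  qed
  have db0: "?db u0 = 1"
  proof -
    have "e1 \<in> {e\<in>?Kb. u0\<in>e}" using e1K e1 by blast
    then have "?db u0 \<noteq> 0" using fin_CK by auto
    then show ?thesis using db1[of u0] by simp
  qed
  have fC: "finite ?C" by (rule fin_CV)
  have "(\<Sum>u\<in>?C. ?da u) = ?da u0 + (\<Sum>u\<in>?C - {u0}. ?da u)" using sum.remove[OF fC u0] .
  also have "\<dots> = (\<Sum>u\<in>?C - {u0}. ?da u)" using da0 by simp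
  also have "\<dots> \<le> (\<Sum>u\<in>?C - {u0}. ?db u + ?s u)" using ineq by (intro sum_mono) auto
  also have "\<dots> = (\<Sum>u\<in>?C - {u0}. ?db u) + (\<Sum>u\<in>?C - {u0}. ?s u)" by (simp add: sum.distrib)
  finally have 1: "(\<Sum>u\<in>?C. ?da u) \<le> (\<Sum>u\<in>?C - {u0}. ?db u) + (\<Sum>u\<in>?C - {u0}. ?s u)" .
  have 2: "(\<Sum>u\<in>?C. ?db u) = 1 + (\<Sum>u\<in>?C - {u0}. ?db u)" using sum.remove[OF fC u0, of ?db] db0 by simp
  have "?s u0 = 1" using dsum[of u0] da0 db0 by simp
  then have 3: "(\<Sum>u\<in>?C. ?s u) = 1 + (\<Sum>u\<in>?C - {u0}. ?s u)" using sum.remove[OF fC u0, of ?s] by simp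
  have 4: "(\<Sum>u\<in>?C. ?s u) \<le> 2" by (rule slack[OF P])
  have "(\<Sum>u\<in>?C. ?da u) \<le> (\<Sum>u\<in>?C. ?db u)" using 1 2 3 4 by linarith
  then have "2 * card ?Ka \<le> 2 * card ?Kb"
    using handshake[of ?Ka f a b v] handshake[of ?Kb f a b v] by simp
  then have "card ?Ka \<le> card ?Kb" by simp
  then show ?thesis using hc_split[OF ab, of f v] by simp
qed

lemma CV_single:
  assumes e0: "{x,w} \<in> E" and only: "\<And>e. e \<in> E \<Longrightarrow> x \<in> e \<or> w \<in> e \<Longrightarrow> f e = a \<or> f e = b \<Longrightarrow> e = {x,w}"
  shows "CV f a b x \<subseteq> {x,w}"
proof
  fix u assume "u \<in> CV f a b x"
  then have "(edge_adj (TC f a b))\<^sup>*\<^sup>* x u" unfolding CV_def by simp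
  then show "u \<in> {x,w}"
  proof (induction rule: rtranclp_induct)
    case base then show ?case by simp
  next
    case (step y z)
    then have "{y,z} \<in> E" "f {y,z} = a \<or> f {y,z} = b" unfolding edge_adj_def TC_iff by simp_all
    moreover have "x \<in> {y,z} \<or> w \<in> {y,z}" using step.IH by auto
    ultimately have "{y,z} = {x,w}" using only by blast
    then show ?case by auto
  qed
qed

lemma kswap_single:
  assumes e0: "{x,w} \<in> E" and c0: "f {x,w} = a \<or> f {x,w} = b"
    and only: "\<And>e. e \<in> E \<Longrightarrow> x \<in> e \<or> w \<in> e \<Longrightarrow> f e = a \<or> f e = b \<Longrightarrow> e = {x,w}"
  shows "CK f a b x = {{x,w}}"
proof
  show "CK f a b x \<subseteq> {{x,w}}"
  proof
    fix e assume e: "e \<in> CK f a b x"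
    then have "e \<in> E" "f e = a \<or> f e = b" using CK_E by blast+
    moreover obtain u where "u \<in> e" "u \<in> CV f a b x" using e unfolding CK_iff by blast
    then have "x \<in> e \<or> w \<in> e" using CV_single[OF e0 only] by blast
    ultimately show "e \<in> {{x,w}}" using only by blast
  qed
  have "{x,w} \<in> CK f a b x" using CK_I[of "{x,w}" f a b x x] e0 c0 CV_v by simp
  then show "{{x,w}} \<subseteq> CK f a b x" by blast
qed

end

context kg begin

abbreviation "PR f \<equiv> proper_edge_coloring E t f"
abbreviation "RE \<equiv> (interchange E t)\<^sup>*\<^sup>*"

definition fan where
  "fan f x ys \<longleftrightarrow> ys \<noteq> [] \<and> distinct ys \<and> (\<forall>y\<in>set ys. {x,y} \<in> E \<and> y \<noteq> x) \<and> m < f {x, hd ys}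
     \<and> (\<forall>i. 0 < i \<and> i < length ys \<longrightarrow> f {x, ys!i} \<in> miss f (ys!(i-1)))"

lemma miss_iff: "d \<in> miss f u \<longleftrightarrow> d \<in> {1..m} \<and> \<not>(\<exists>e\<in>E. u\<in>e \<and> f e = d)"
  unfolding miss_def by simp

lemma doubleton_same: "{x,y} = {x,z} \<Longrightarrow> y \<noteq> x \<Longrightarrow> y = z"
  by (auto simp: doubleton_eq_iff)

lemma rot:
  "fan f x ys \<Longrightarrow> PR f \<Longrightarrow> \<exists>g. RE f g \<and> PR g \<and> hc g \<le> hc f \<and> g {x, last ys} = f {x, hd ys}
     \<and> (\<forall>d. d \<le> m \<longrightarrow> (\<forall>i. 0 < i \<and> i < length ys \<longrightarrow> f {x, ys!i} \<noteq> d) \<longrightarrow> (\<forall>e. g e = d \<longleftrightarrow> f e = d))"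
proof (induction ys arbitrary: f)
  case Nil then show ?case unfolding fan_def by simp
next
  case (Cons y0 rest)
  show ?case
  proof (cases rest)
    case Nil
    then show ?thesis using Cons.prems(2) by (intro exI[of _ f]) simp
  next
    case (Cons y1 rest')
    note F = Cons.prems(1)[unfolded fan_def]
    have P: "PR f" by (rule Cons.prems(2))
    have ys: "y0 # rest = y0 # y1 # rest'" using Cons by simp
    have FC: "\<forall>i. 0 < i \<and> i < length (y0 # y1 # rest') \<longrightarrow> f {x, (y0 # y1 # rest')!i} \<in> miss f ((y0 # y1 # rest')!(i-1))"
      using F Cons by (simp only:) blast
    let ?a = "f {x,y1}" and ?c = "f {x,y0}"
    have dist: "distinct (y0 # y1 # rest')" using F ys by simp
    have nb: "\<forall>y\<in>set (y0 # y1 # rest'). {x,y} \<in> E \<and> y \<noteq> x" using F ys by simp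
    have e0: "{x,y0} \<in> E" and e1: "{x,y1} \<in> E" using nb by auto
    have cm: "m < ?c" using F by simp
    have i1: "0 < (1::nat) \<and> 1 < length (y0 # y1 # rest')" by simp
    have amiss: "?a \<in> miss f y0" using FC[rule_format, OF i1] by simp
    then have a1: "?a \<in> {1..m}" and ay0: "\<not>(\<exists>e\<in>E. y0\<in>e \<and> f e = ?a)" unfolding miss_iff by auto
    have at: "?a \<in> {1..t}" using a1 tgt by auto
    have ct: "?c \<in> {1..t}" using proper_range[OF P e0] .
    have anc: "?a \<noteq> ?c" using a1 cm by auto
    let ?g1 = "kswap f ?a ?c x"
    have K1: "{x,y1} \<in> CK f ?a ?c x" using CK_I[of "{x,y1}" f ?a ?c x x] e1 CV_v by simp
    have K0: "{x,y0} \<in> CK f ?a ?c x" using CK_I[of "{x,y0}" f ?a ?c x x] e0 CV_v by simp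
    have int: "interchange E t f ?g1" using kswap_interchange[OF at ct] K1 by blast
    have P1: "PR ?g1" using kswap_proper[OF P at ct] .
    have g1y0: "?g1 {x,y0} = ?a" using kswap_in[OF K0] anc unfolding sw_def by simp
    have g1y1: "?g1 {x,y1} = ?c" using kswap_in[OF K1] anc unfolding sw_def by simp
    have y0CV: "y0 \<in> CV f ?a ?c x" using CK_sub_CV[OF K0] by blast
    have hc1: "hc ?g1 \<le> hc f"
      using hc_le_swap[OF P _ cm y0CV ay0 e0 _ refl] a1 by simp
    have fan1: "fan ?g1 x (y1 # rest')"
      unfolding fan_def
    proof (intro conjI allI impI)
      show "y1 # rest' \<noteq> []" by simp
      show "distinct (y1 # rest')" using dist by simp
      show "\<forall>y\<in>set (y1 # rest'). {x, y} \<in> E \<and> y \<noteq> x" using nb by simp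
      show "m < ?g1 {x, hd (y1 # rest')}" using g1y1 cm by simp
      fix i assume i: "0 < i \<and> i < length (y1 # rest')"
      let ?y = "(y1 # rest') ! i" and ?yp = "(y1 # rest') ! (i - 1)"
      have yy1: "?y = (y0 # y1 # rest') ! Suc i" by (simp only: nth_Cons_Suc)
      have yy2: "?yp = (y0 # y1 # rest') ! (Suc i - 1)" using i by (cases i) simp_all
      have ii: "0 < Suc i \<and> Suc i < length (y0 # y1 # rest')" using i by simp
      have "f {x, (y0 # y1 # rest') ! Suc i} \<in> miss f ((y0 # y1 # rest') ! (Suc i - 1))"
        using FC[rule_format, OF ii] .
      then have cm1: "f {x, ?y} \<in> miss f ?yp" unfolding yy1 yy2 .
      then have cl: "f {x, ?y} \<le> m" unfolding miss_iff by simp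
      have yne: "?y \<noteq> y1" using dist i by (auto simp: nth_eq_iff_index_eq)
      have yin: "?y \<in> set (y1 # rest')" using i by (metis nth_mem)
      then have yE: "{x,?y} \<in> E" "?y \<noteq> x" using nb by auto
      have "{x,?y} \<noteq> {x,y1}" using yne yE(2) doubleton_same by blast
      then have cna: "f {x,?y} \<noteq> ?a" using proper_uniq[OF P yE(1) e1, of x] by auto
      have cnc: "f {x,?y} \<noteq> ?c" using cl cm by simp
      have "?g1 {x,?y} = f {x,?y}" using kswap_other[OF cna cnc] by blast
      then show "?g1 {x, ?y} \<in> miss ?g1 ?yp" using miss_other[OF cna cnc] cm1 by simp
    qed
    obtain g where g: "RE ?g1 g" "PR g" "hc g \<le> hc ?g1" "g {x, last (y1#rest')} = ?g1 {x, hd (y1#rest')}"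
      and inv: "\<forall>d. d \<le> m \<longrightarrow> (\<forall>i. 0 < i \<and> i < length (y1#rest') \<longrightarrow> ?g1 {x, (y1#rest')!i} \<noteq> d)
          \<longrightarrow> (\<forall>e. g e = d \<longleftrightarrow> ?g1 e = d)"
      using Cons.IH[OF _ P1] fan1 Cons by blast
    show ?thesis
    proof (intro exI[of _ g] conjI allI impI)
      show "RE f g" using int g(1) by (meson converse_rtranclp_into_rtranclp)
      show "PR g" by (rule g(2))
      show "hc g \<le> hc f" using g(3) hc1 by simp
      show "g {x, last (y0 # rest)} = f {x, hd (y0 # rest)}" using g(4) g1y1 Cons by simp
      fix d e assume dm: "d \<le> m" and nd: "\<forall>i. 0 < i \<and> i < length (y0 # rest) \<longrightarrow> f {x, (y0 # rest) ! i} \<noteq> d"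
      have "f {x, (y0 # y1 # rest') ! 1} \<noteq> d" using nd[rule_format, of 1] Cons by simp
      then have dna: "d \<noteq> ?a" by simp
      have dnc: "d \<noteq> ?c" using dm cm by simp
      have inv1: "\<forall>e. ?g1 e = d \<longleftrightarrow> f e = d" using kswap_other dna dnc by metis
      have "\<forall>i. 0 < i \<and> i < length (y1#rest') \<longrightarrow> ?g1 {x, (y1#rest')!i} \<noteq> d"
      proof (intro allI impI)
        fix i assume i: "0 < i \<and> i < length (y1#rest')"
        have ii: "0 < Suc i \<and> Suc i < length (y0 # rest)" using i Cons by simp
        have "f {x, (y0 # rest) ! Suc i} \<noteq> d" using nd[rule_format, OF ii] .
        moreover have "(y0 # rest) ! Suc i = (y1#rest')!i" using Cons by (simp only: nth_Cons_Suc)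
        ultimately have "f {x, (y1#rest')!i} \<noteq> d" by simp
        then show "?g1 {x, (y1#rest')!i} \<noteq> d" using inv1 by blast
      qed
      then have "\<forall>e. g e = d \<longleftrightarrow> ?g1 e = d" using inv dm by blast
      then show "g e = d \<longleftrightarrow> f e = d" using inv1 by blast
    qed
  qed
qed

end

context kg begin

lemma fanD:
  assumes "fan f x ys"
  shows "ys \<noteq> []" "distinct ys" "\<And>y. y \<in> set ys \<Longrightarrow> {x,y} \<in> E" "\<And>y. y \<in> set ys \<Longrightarrow> y \<noteq> x"
    "m < f {x, hd ys}" "\<And>i. 0 < i \<Longrightarrow> i < length ys \<Longrightarrow> f {x, ys!i} \<in> miss f (ys!(i-1))"
  using assms unfolding fan_def by blast+

lemma miss_edge: "d \<in> miss f u \<Longrightarrow> e \<in> E \<Longrightarrow> u \<in> e \<Longrightarrow> f e \<noteq> d"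
  unfolding miss_iff by blast

lemma miss_same:
  assumes "\<forall>e. g e = d \<longleftrightarrow> f e = d"
  shows "d \<in> miss g u \<longleftrightarrow> d \<in> miss f u"
  using assms unfolding miss_iff by simp

lemma RC:
  assumes F: "fan f x ys" and P: "PR f" and dx: "d \<in> miss f x" and dw: "d \<in> miss f (last ys)"
  shows "good f"
proof -
  obtain g where g: "RE f g" "PR g" "hc g \<le> hc f" "g {x, last ys} = f {x, hd ys}"
    and inv: "\<forall>d. d \<le> m \<longrightarrow> (\<forall>i. 0 < i \<and> i < length ys \<longrightarrow> f {x, ys!i} \<noteq> d) \<longrightarrow> (\<forall>e. g e = d \<longleftrightarrow> f e = d)"
    using rot[OF F P] by blast
  have dm: "d \<in> {1..m}" using dx unfolding miss_iff by simp
  have "\<forall>i. 0 < i \<and> i < length ys \<longrightarrow> f {x, ys!i} \<noteq> d"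
  proof (intro allI impI)
    fix i assume i: "0 < i \<and> i < length ys"
    then have "ys!i \<in> set ys" by simp
    then have "{x, ys!i} \<in> E" using fanD(3)[OF F] by blast
    then show "f {x, ys!i} \<noteq> d" using miss_edge[OF dx] by blast
  qed
  then have gd: "\<forall>e. g e = d \<longleftrightarrow> f e = d" using inv dm by simp
  have dxg: "d \<in> miss g x" and dwg: "d \<in> miss g (last ys)" using miss_same[OF gd] dx dw by blast+
  let ?w = "last ys" and ?c = "f {x, hd ys}"
  have wset: "?w \<in> set ys" using fanD(1)[OF F] by simp
  have ew: "{x,?w} \<in> E" using fanD(3)[OF F wset] .
  have cm: "m < ?c" using fanD(5)[OF F] .
  have gc: "g {x,?w} = ?c" using g(4) .
  have ct: "?c \<in> {1..t}" using proper_range[OF g(2) ew] gc by simp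
  have dt: "d \<in> {1..t}" using dm tgt by auto
  have only: "e = {x,?w}" if e: "e \<in> E" "x \<in> e \<or> ?w \<in> e" "g e = d \<or> g e = ?c" for e
  proof -
    have "g e \<noteq> d" using e(1,2) miss_edge[OF dxg] miss_edge[OF dwg] by blast
    then have "g e = g {x,?w}" using e(3) gc by simp
    then show ?thesis using e(1,2) proper_uniq[OF g(2) e(1) ew] by blast
  qed
  have K: "CK g d ?c x = {{x,?w}}" using kswap_single[OF ew _ only] gc by simp
  let ?g' = "kswap g d ?c x"
  have int: "interchange E t g ?g'" using kswap_interchange[OF dt ct] K by simp
  have P': "PR ?g'" using kswap_proper[OF g(2) dt ct] .
  have g'w: "?g' {x,?w} = d" using kswap_in[of "{x,?w}" g d ?c x] K gc cm dm unfolding sw_def by auto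
  have g'o: "?g' e = g e" if "e \<noteq> {x,?w}" for e using kswap_out[of e g d ?c x] K that by simp
  have "{e\<in>E. m < ?g' e} = {e\<in>E. m < g e} - {{x,?w}}"
  proof (rule set_eqI)
    fix e show "e \<in> {e\<in>E. m < ?g' e} \<longleftrightarrow> e \<in> {e\<in>E. m < g e} - {{x,?w}}"
    proof (cases "e = {x,?w}")
      case True then show ?thesis using g'w dm by simp
    next
      case False then show ?thesis using g'o[OF False] by simp
    qed
  qed
  moreover have "{x,?w} \<in> {e\<in>E. m < g e}" using ew gc cm by simp
  moreover have "finite {e\<in>E. m < g e}" using finE by simp
  ultimately have "hc ?g' < hc g" unfolding hc_def
    using card_Diff1_less[of "{e\<in>E. m < g e}" "{x,?w}"] by simp
  then show ?thesis unfolding good_def using g(1,3) int P'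
    by (meson order.strict_trans2 rtranclp.rtrancl_into_rtrancl)
qed

end

context kg begin

lemma good_eq: "interchange E t f g \<Longrightarrow> hc g = hc f \<Longrightarrow> good g \<Longrightarrow> good f"
  using good_trans[of f g] by (simp add: r_into_rtranclp)

lemma MG:
  assumes F: "fan f x ys" and P: "PR f" and dw: "d \<in> miss f (last ys)"
    and ez: "{x,z} \<in> E" and fz: "f {x,z} = d" and zin: "z \<in> set ys"
  shows "good f"
proof -
  have dm: "d \<in> {1..m}" using dw unfolding miss_iff by simp
  have hs: "hd ys \<in> set ys" using fanD(1)[OF F] by simp
  have e0: "{x, hd ys} \<in> E" using fanD(3)[OF F hs] .
  obtain c0 where c0: "c0 \<in> miss f x" using miss_nonempty[of "{x, hd ys}" x f] e0 fanD(5)[OF F] by blast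
  have c0m: "c0 \<in> {1..m}" using c0 unfolding miss_iff by simp
  have c0d: "c0 \<noteq> d" using miss_edge[OF c0 ez] fz by auto
  obtain j where j: "j < length ys" "ys!j = z" using zin by (metis in_set_conv_nth)
  have j0: "j \<noteq> 0"
  proof
    assume "j = 0"
    then have "z = hd ys" using j fanD(1)[OF F] by (simp add: hd_conv_nth)
    then show False using fz fanD(5)[OF F] dm by simp
  qed
  let ?g = "kswap f c0 d x"
  have Kz: "{x,z} \<in> CK f c0 d x" using CK_I[of "{x,z}" f c0 d x x] ez fz CV_v by simp
  have c0t: "c0 \<in> {1..t}" and dt: "d \<in> {1..t}" using c0m dm tgt by auto
  have int: "interchange E t f ?g" using kswap_interchange[OF c0t dt] Kz by blast
  have Pg: "PR ?g" using kswap_proper[OF P c0t dt] .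
  have hceq: "hc ?g = hc f" using hc_eq_low c0m dm by simp
  have xCV: "x \<in> CV f c0 d x" by (rule CV_v)
  have dxg: "d \<in> miss ?g x" using miss_inV[OF xCV dm] c0 c0m c0d unfolding sw_def by simp
  have gz: "?g {x,z} = c0" using kswap_in[OF Kz] fz c0d unfolding sw_def by simp
  have oth: "?g {x, ys!i} = f {x, ys!i} \<and> (0 < i \<longrightarrow> ?g {x, ys!i} \<in> miss ?g (ys!(i-1)))"
    if i: "i < length ys" "i \<noteq> j" for i
  proof -
    have yi: "ys!i \<in> set ys" using i by simp
    have ei: "{x, ys!i} \<in> E" using fanD(3)[OF F yi] .
    have "ys!i \<noteq> z" using nth_eq_iff_index_eq[OF fanD(2)[OF F] i(1) j(1)] i(2) j(2) by simp
    then have "{x, ys!i} \<noteq> {x,z}" using doubleton_same fanD(4)[OF F yi] by blast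
    then have nd: "f {x, ys!i} \<noteq> d" using proper_uniq[OF P ei ez, of x] fz by auto
    have nc: "f {x, ys!i} \<noteq> c0" using miss_edge[OF c0 ei] by simp
    have eq: "?g {x, ys!i} = f {x, ys!i}" using kswap_other[OF nc nd] by blast
    moreover have "0 < i \<longrightarrow> ?g {x, ys!i} \<in> miss ?g (ys!(i-1))"
    proof
      assume "0 < i"
      then have "f {x, ys!i} \<in> miss f (ys!(i-1))" using fanD(6)[OF F] i by blast
      then show "?g {x, ys!i} \<in> miss ?g (ys!(i-1))" using eq miss_other[OF nc nd] by simp
    qed
    ultimately show ?thesis by blast
  qed
  have hdg: "?g {x, hd ys} = f {x, hd ys}"
    using oth[of 0] j0 fanD(1)[OF F] by (simp add: hd_conv_nth)
  have jm1: "j - 1 < length ys" using j by simp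
  have dprev: "d \<in> miss f (ys!(j-1))" using fanD(6)[OF F, of j] j j0 fz by simp
  show ?thesis
  proof (cases "ys!(j-1) \<in> CV f c0 d x")
    case False
    let ?ys = "take j ys"
    have ne: "?ys \<noteq> []" using j0 j fanD(1)[OF F] by simp
    have ln: "length ?ys = j" using j by simp
    have lt: "last ?ys = ys!(j-1)" using last_conv_nth[OF ne] ln j0 by simp
    have F': "fan ?g x ?ys"
      unfolding fan_def
    proof (intro conjI allI impI ballI)
      show "?ys \<noteq> []" using j0 fanD(1)[OF F] by simp
      show "distinct ?ys" using fanD(2)[OF F] by simp
      fix y assume "y \<in> set ?ys"
      then have "y \<in> set ys" by (meson in_set_takeD)
      then show "{x, y} \<in> E" "y \<noteq> x" using fanD(3,4)[OF F] by blast+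
    next
      show "m < ?g {x, hd ?ys}" using hdg fanD(5)[OF F] j0 fanD(1)[OF F] by simp
    next
      fix i assume i: "0 < i \<and> i < length ?ys"
      then have ij: "i < j" "i < length ys" by auto
      have n1: "?ys ! i = ys ! i" "?ys ! (i-1) = ys ! (i-1)" using ij by auto
      have "?g {x, ys!i} \<in> miss ?g (ys!(i-1))" using oth[of i] ij i by blast
      then show "?g {x, ?ys ! i} \<in> miss ?g (?ys ! (i-1))" unfolding n1 .
    qed
    have "d \<in> miss ?g (last ?ys)" using lt miss_outV[OF False] dprev by simp
    then have "good ?g" using RC[OF F' Pg dxg] by blast
    then show ?thesis using good_eq[OF int hceq] by blast
  next
    case True
    let ?w = "last ys"
    have wset: "?w \<in> set ys" using fanD(1)[OF F] by simp
    have wnCV: "?w \<notin> CV f c0 d x"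
    proof
      assume wC: "?w \<in> CV f c0 d x"
      have jset: "ys!(j-1) \<in> set ys" using jm1 by simp
      have n1: "x \<noteq> ys!(j-1)" using fanD(4)[OF F jset] by simp
      have n2: "x \<noteq> ?w" using fanD(4)[OF F wset] by simp
      have "?w = ys!(length ys - 1)" using fanD(1)[OF F] by (simp add: last_conv_nth)
      moreover have "j - 1 \<noteq> length ys - 1" using j j0 by simp
      moreover have "length ys - 1 < length ys" using fanD(1)[OF F] by simp
      ultimately have n3: "ys!(j-1) \<noteq> ?w" using nth_eq_iff_index_eq[OF fanD(2)[OF F] jm1, of "length ys - 1"]
        by simp
      have d1: "card {e\<in>CK f c0 d x. x\<in>e} = 1"
        using deg_one[OF P Kz, of x] c0 unfolding miss_iff by blast
      obtain e2 where e2: "e2 \<in> CK f c0 d x" "ys!(j-1) \<in> e2" using CV_edge[OF True] n1 by metis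
      have d2: "card {e\<in>CK f c0 d x. ys!(j-1)\<in>e} = 1"
        using deg_one[OF P e2] dprev unfolding miss_iff by blast
      obtain e3 where e3: "e3 \<in> CK f c0 d x" "?w \<in> e3" using CV_edge[OF wC] n2 by metis
      have d3: "card {e\<in>CK f c0 d x. ?w\<in>e} = 1"
        using deg_one[OF P e3] dw unfolding miss_iff by blast
      show False using three_contra[OF P xCV True wC n1 n2 n3 d1 d2 d3] .
    qed
    have F': "fan ?g x ys"
      unfolding fan_def
    proof (intro conjI allI impI ballI)
      show "ys \<noteq> []" using fanD(1)[OF F] .
      show "distinct ys" using fanD(2)[OF F] .
      fix y assume "y \<in> set ys"
      then show "{x, y} \<in> E" "y \<noteq> x" using fanD(3,4)[OF F] by blast+
    next
      show "m < ?g {x, hd ys}" using hdg fanD(5)[OF F] by simp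
    next
      fix i assume i: "0 < i \<and> i < length ys"
      show "?g {x, ys ! i} \<in> miss ?g (ys ! (i-1))"
      proof (cases "i = j")
        case False then show ?thesis using oth[of i] i by blast
      next
        case True
        have "c0 \<in> miss ?g (ys!(j-1)) \<longleftrightarrow> sw c0 d c0 \<in> miss f (ys!(j-1))"
          using miss_inV[of "ys!(j-1)" f c0 d x c0] \<open>ys!(j-1) \<in> CV f c0 d x\<close> c0m dm
          unfolding sw_def by simp
        then have "c0 \<in> miss ?g (ys!(j-1))" using dprev unfolding sw_def by simp
        then show ?thesis using True gz j by simp
      qed
    qed
    have "d \<in> miss ?g (last ys)" using miss_outV[OF wnCV] dw by simp
    then have "good ?g" using RC[OF F' Pg dxg] by blast
    then show ?thesis using good_eq[OF int hceq] by blast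
  qed
qed

end

context kg begin

abbreviation "D \<equiv> max_deg_vertices V E"

lemma fan_snoc:
  assumes F: "fan f x ys" and ez: "{x,z} \<in> E" and zx: "z \<noteq> x" and zn: "z \<notin> set ys"
    and fz: "f {x,z} \<in> miss f (last ys)"
  shows "fan f x (ys @ [z])"
  unfolding fan_def
proof (intro conjI allI impI ballI)
  show "ys @ [z] \<noteq> []" by simp
  show "distinct (ys @ [z])" using fanD(2)[OF F] zn by simp
  fix y assume "y \<in> set (ys @ [z])"
  then show "{x, y} \<in> E" "y \<noteq> x" using fanD(3,4)[OF F] ez zx by auto
next
  show "m < f {x, hd (ys @ [z])}" using fanD(5)[OF F] fanD(1)[OF F] by simp
next
  fix i assume i: "0 < i \<and> i < length (ys @ [z])"
  show "f {x, (ys @ [z]) ! i} \<in> miss f ((ys @ [z]) ! (i - 1))"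
  proof (cases "i < length ys")
    case True
    then have "(ys @ [z]) ! i = ys ! i" "(ys @ [z]) ! (i-1) = ys ! (i-1)" by (auto simp: nth_append)
    then show ?thesis using fanD(6)[OF F] i True by simp
  next
    case False
    then have ii: "i = length ys" using i by simp
    then have "(ys @ [z]) ! i = z" by simp
    moreover have "(ys @ [z]) ! (i-1) = last ys" using ii fanD(1)[OF F]
      by (simp add: nth_append last_conv_nth)
    ultimately show ?thesis using fz by simp
  qed
qed

lemma edge_other: assumes "e \<in> E" "x \<in> e" obtains z where "e = {x,z}"
proof -
  obtain u v where uv: "e = {u,v}" using edgeE[OF assms(1)] by blast
  show ?thesis
  proof (cases "u = x")
    case True then show ?thesis using that uv by blast
  next
    case False then have "v = x" using uv assms(2) by simp
    then have "e = {x,u}" using uv by blast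
    then show ?thesis using that by blast
  qed
qed

lemma grow:
  "\<forall>ys. card V - length ys = n \<longrightarrow> fan f x ys \<longrightarrow> miss f (last ys) \<noteq> {} \<longrightarrow> PR f \<longrightarrow>
     good f \<or> (\<exists>g z. RE f g \<and> PR g \<and> hc g \<le> hc f \<and> {x,z} \<in> E \<and> z \<notin> set ys \<and> z \<in> D \<and> m < g {x,z})"
proof (induction n rule: less_induct)
  case (less n)
  show ?case
  proof (intro allI impI)
    fix ys assume n: "card V - length ys = n" and F: "fan f x ys" and M: "miss f (last ys) \<noteq> {}" and P: "PR f"
    obtain d where d: "d \<in> miss f (last ys)" using M by blast
    have dm: "d \<in> {1..m}" using d unfolding miss_iff by simp
    show "good f \<or> (\<exists>g z. RE f g \<and> PR g \<and> hc g \<le> hc f \<and> {x,z} \<in> E \<and> z \<notin> set ys \<and> z \<in> D \<and> m < g {x,z})"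
    proof (cases "d \<in> miss f x")
      case True then show ?thesis using RC[OF F P True d] by blast
    next
      case False
      then obtain e where e: "e \<in> E" "x \<in> e" "f e = d" using dm unfolding miss_iff by blast
      obtain z where z: "e = {x,z}" using edge_other[OF e(1,2)] by blast
      have ez: "{x,z} \<in> E" and fz: "f {x,z} = d" using e z by auto
      have zx: "z \<noteq> x" using edge_ne[OF ez] by simp
      show ?thesis
      proof (cases "z \<in> set ys")
        case True then show ?thesis using MG[OF F P d ez fz] by blast
      next
        case zn: False
        have F': "fan f x (ys @ [z])" using fan_snoc[OF F ez zx zn] fz d by simp
        have sub: "set (ys @ [z]) \<subseteq> V" using fanD(3)[OF F'] edge_V by blast
        have "length (ys @ [z]) = card (set (ys @ [z]))" using fanD(2)[OF F'] by (simp add: distinct_card)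
        also have "\<dots> \<le> card V" using card_mono[OF finV sub] .
        finally have len: "length (ys @ [z]) \<le> card V" .
        then have lt: "card V - length (ys @ [z]) < n" using n by simp
        show ?thesis
        proof (cases "miss f z = {}")
          case False
          have "good f \<or> (\<exists>g z'. RE f g \<and> PR g \<and> hc g \<le> hc f \<and> {x,z'} \<in> E \<and> z' \<notin> set (ys @ [z]) \<and> z' \<in> D \<and> m < g {x,z'})"
            using less.IH[OF lt, rule_format, OF refl F'] False P by simp
          then show ?thesis by auto
        next
          case True
          obtain g where g: "RE f g" "PR g" "hc g \<le> hc f" "g {x, last (ys @ [z])} = f {x, hd (ys @ [z])}"
            using rot[OF F' P] by blast
          have gz: "m < g {x,z}" using g(4) fanD(5)[OF F'] by simp
          have zV: "z \<in> V" using edge_V[OF ez] by simp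
          have "z \<in> D" using sat_deg[OF zV True] zV unfolding max_deg_vertices_def by simp
          then show ?thesis using g gz ez zn by blast
        qed
      qed
    qed
  qed
qed

lemma round:
  assumes P: "PR f" and e: "{x,y0} \<in> E" and h: "m < f {x,y0}"
  shows "good f \<or> (\<exists>g z. RE f g \<and> PR g \<and> hc g \<le> hc f \<and> {x,z} \<in> E \<and> z \<noteq> y0 \<and> z \<in> D \<and> m < g {x,z})"
proof -
  have F: "fan f x [y0]" unfolding fan_def using e h edge_ne[OF e] by auto
  have "miss f y0 \<noteq> {}" using miss_nonempty[of "{x,y0}" y0 f] e h by simp
  then show ?thesis using grow[rule_format, OF refl F] P by auto
qed

end

context kg begin

lemma finD: "finite D" using finV unfolding max_deg_vertices_def by simp

lemma walk:
  assumes acyc: "acyclic_graph D (induced_edges E D)"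
  shows "\<forall>ws f p. card D - length ws = n \<longrightarrow> ws \<noteq> [] \<longrightarrow> distinct ws \<longrightarrow> set ws \<subseteq> D \<longrightarrow>
     (\<forall>i < length ws - 1. {ws!i, ws!Suc i} \<in> induced_edges E D) \<longrightarrow>
     (2 \<le> length ws \<longrightarrow> p = ws!(length ws - 2)) \<longrightarrow> PR f \<longrightarrow> {last ws, p} \<in> E \<longrightarrow>
     m < f {last ws, p} \<longrightarrow> good f"
proof (induction n rule: less_induct)
  case (less n)
  show ?case
  proof (intro allI impI)
    fix ws f p
    assume n: "card D - length ws = n" and ne: "ws \<noteq> []" and dw: "distinct ws" and sD: "set ws \<subseteq> D"
      and cons: "\<forall>i < length ws - 1. {ws!i, ws!Suc i} \<in> induced_edges E D"
      and pp: "2 \<le> length ws \<longrightarrow> p = ws!(length ws - 2)" and P: "PR f"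
      and ep: "{last ws, p} \<in> E" and hp: "m < f {last ws, p}"
    let ?w = "last ws" and ?L = "length ws"
    have wD: "?w \<in> D" using sD ne by auto
    from round[OF P ep hp]
    show "good f"
    proof (elim disjE exE conjE)
      assume "good f" then show ?thesis .
    next
      fix g z assume g: "RE f g" "PR g" "hc g \<le> hc f" and ez: "{?w,z} \<in> E" and zp: "z \<noteq> p"
        and zD: "z \<in> D" and gz: "m < g {?w,z}"
      show ?thesis
      proof (cases "hc g < hc f")
        case True then show ?thesis unfolding good_def using g by blast
      next
        case False
        have zw: "z \<noteq> ?w" using edge_ne[OF ez] by simp
        have zind: "{?w,z} \<in> induced_edges E D" using ez wD zD unfolding induced_edges_def by simp
        have zn: "z \<notin> set ws"
        proof
          assume "z \<in> set ws"
          then obtain i where i: "i < ?L" "ws!i = z" by (metis in_set_conv_nth)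
          have lastn: "?w = ws!(?L - 1)" using ne by (simp add: last_conv_nth)
          have i1: "i \<noteq> ?L - 1" using i zw lastn by auto
          have i2: "i \<noteq> ?L - 2"
          proof
            assume ii: "i = ?L - 2"
            then have "2 \<le> ?L" using i i1 by linarith
            then show False using pp ii i zp by simp
          qed
          have i3: "i + 3 \<le> ?L" using i i1 i2 by linarith
          let ?vs = "drop i ws"
          have "length ?vs \<ge> 3" using i3 by simp
          moreover have "distinct ?vs" using distinct_drop[OF dw] .
          moreover have "set ?vs \<subseteq> D" using order_trans[OF set_drop_subset sD] .
          moreover have "\<forall>k < length ?vs - 1. {?vs!k, ?vs!Suc k} \<in> induced_edges E D"
          proof (intro allI impI)
            fix k assume k: "k < length ?vs - 1"
            then have "i + k < ?L - 1" by simp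
            then have "{ws!(i+k), ws!Suc (i+k)} \<in> induced_edges E D" using cons by blast
            then show "{?vs!k, ?vs!Suc k} \<in> induced_edges E D" using k by simp
          qed
          moreover have "last ?vs = ?w" using i by simp
          moreover have "hd ?vs = z" using i by (simp add: hd_drop_conv_nth)
          ultimately have "\<exists>vs. length vs \<ge> 3 \<and> distinct vs \<and> set vs \<subseteq> D \<and>
            (\<forall>i < length vs - 1. {vs ! i, vs ! Suc i} \<in> induced_edges E D) \<and> {last vs, hd vs} \<in> induced_edges E D"
            using zind by metis
          then show False using acyc unfolding acyclic_graph_def by blast
        qed
        let ?ws = "ws @ [z]"
        have ne': "?ws \<noteq> []" by simp
        have dw': "distinct ?ws" using dw zn by simp
        have sD': "set ?ws \<subseteq> D" using sD zD by simp
        have cons': "\<forall>i < length ?ws - 1. {?ws!i, ?ws!Suc i} \<in> induced_edges E D"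
        proof (intro allI impI)
          fix i assume i: "i < length ?ws - 1"
          show "{?ws!i, ?ws!Suc i} \<in> induced_edges E D"
          proof (cases "i < ?L - 1")
            case True
            then have "?ws!i = ws!i" "?ws!Suc i = ws!Suc i" by (auto simp: nth_append)
            then show ?thesis using cons True by simp
          next
            case False
            then have ii: "i = ?L - 1" using i by simp
            then have "?ws!i = ?w" using ne by (simp add: nth_append last_conv_nth)
            moreover have "?ws!Suc i = z" using ii ne by (simp add: nth_append)
            ultimately show ?thesis using zind by simp
          qed
        qed
        have pp': "2 \<le> length ?ws \<longrightarrow> ?w = ?ws!(length ?ws - 2)"
          using ne by (simp add: nth_append last_conv_nth)
        have ep': "{last ?ws, ?w} \<in> E" using ez by (simp add: insert_commute)
        have hp': "m < g {last ?ws, ?w}" using gz by (simp add: insert_commute)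
        have "length ?ws = card (set ?ws)" using dw' by (simp add: distinct_card)
        also have "\<dots> \<le> card D" using card_mono[OF finD sD'] .
        finally have lt: "card D - length ?ws < n" using n by simp
        have "card D - length ?ws = card D - length ?ws \<longrightarrow> ?ws \<noteq> [] \<longrightarrow> distinct ?ws \<longrightarrow> set ?ws \<subseteq> D \<longrightarrow>
          (\<forall>i < length ?ws - 1. {?ws!i, ?ws!Suc i} \<in> induced_edges E D) \<longrightarrow>
          (2 \<le> length ?ws \<longrightarrow> ?w = ?ws!(length ?ws - 2)) \<longrightarrow> PR g \<longrightarrow> {last ?ws, ?w} \<in> E \<longrightarrow>
          m < g {last ?ws, ?w} \<longrightarrow> good g"
          using less.IH[OF lt] by blast
        then have "good g" using ne' dw' sD' cons' pp' g(2) ep' hp' by blast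
        then show ?thesis using good_trans[OF g(1) g(3)] by blast
      qed
    qed
  qed
qed

lemma step:
  assumes acyc: "acyclic_graph D (induced_edges E D)" and P: "PR f" and h: "0 < hc f"
  shows "good f"
proof -
  have "{e\<in>E. m < f e} \<noteq> {}" using h unfolding hc_def by (metis card.empty less_irrefl)
  then obtain e where e: "e \<in> E" "m < f e" by blast
  obtain x y where xy: "e = {x,y}" using edgeE[OF e(1)] by blast
  have exy: "{x,y} \<in> E" "m < f {x,y}" using e xy by auto
  from round[OF P exy]
  show ?thesis
  proof (elim disjE exE conjE)
    assume "good f" then show ?thesis .
  next
    fix g z assume g: "RE f g" "PR g" "hc g \<le> hc f" and ez: "{x,z} \<in> E" and zy: "z \<noteq> y"
      and zD: "z \<in> D" and gz: "m < g {x,z}"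
    show ?thesis
    proof (cases "hc g < hc f")
      case True then show ?thesis unfolding good_def using g by blast
    next
      case False
      have ep: "{last [z], x} \<in> E" using ez by (simp add: insert_commute)
      have hp: "m < g {last [z], x}" using gz by (simp add: insert_commute)
      have "good g" using walk[OF acyc, rule_format, OF refl _ _ _ _ _ g(2) ep hp] zD by simp
      then show ?thesis using good_trans[OF g(1) g(3)] by blast
    qed
  qed
qed

lemma final:
  assumes acyc: "acyclic_graph D (induced_edges E D)"
  shows "PR f \<Longrightarrow> \<exists>g. RE f g \<and> proper_edge_coloring E m g"
proof (induction "hc f" arbitrary: f rule: less_induct)
  case less
  show ?case
  proof (cases "hc f = 0")
    case True
    have "{e\<in>E. m < f e} = {}" using True finE unfolding hc_def by simp
    then have low: "\<forall>e\<in>E. f e \<le> m" by auto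
    have "proper_edge_coloring E m f"
      using less.prems low unfolding proper_edge_coloring_def by auto
    then show ?thesis by blast
  next
    case False
    then obtain g where g: "RE f g" "PR g" "hc g < hc f"
      using step[OF acyc less.prems] unfolding good_def by blast
    obtain h where "RE g h" "proper_edge_coloring E m h" using less.hyps[OF g(3) g(2)] by blast
    then show ?thesis using g(1) by (meson rtranclp_trans)
  qed
qed

end

theorem proposition3p1:
  fixes V :: "'a set" and E :: "'a set set" and t :: nat and f :: "'a set \<Rightarrow> nat"
  assumes "simple_graph V E"
    and "acyclic_graph (max_deg_vertices V E) (induced_edges E (max_deg_vertices V E))"
    and "t > max_degree V E"
    and "proper_edge_coloring E t f"
  shows "\<exists>g. (interchange E t)\<^sup>*\<^sup>* f g \<and> proper_edge_coloring E (max_degree V E) g"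
proof -
  interpret kg V E t using assms(1,3) by unfold_locales
  show ?thesis using final[OF assms(2) assms(4)] .
qed


end
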